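(* Let $(M,w)$ be an oriented Poisson manifold, $g$ a Riemannian metric on $M$, $dV_g=\sqrt{\det g}\,dx^1\wedge\cdots\wedge dx^n$, and $\Phi=(\det g)\,dx^1\wedge\cdots\wedge dx^n\wedge dy^1\wedge\cdots\wedge dy^n$, a volume form on $TM$. Then the modular vector field of $(TM,w^C,\Phi)$ is $$\Delta^{TM}_\Phi=2\,(\Delta^M_{dV_g})^V,$$ where $\Delta^M_{dV_g}=\sum_k\left(\frac{\partial w^{ik}}{\partial x^k}+w^{ik}\frac{\partial\ln\sqrt{\det g}}{\partial x^k}\right)\frac{\partial}{\partial x^i}$ is the modular vector field of $(M,w,dV_g)$.
   Context: Coordinates $(x^i)$ on $M$, induced coordinates $(x^i,y^i)$ on $TM$. $w=\frac12w^{ij}\partial_{x^i}\wedge\partial_{x^j}$ and its complete lift $w^C=w^{ij}\partial_{x^i}\wedge\partial_{y^j}+\frac12y^k\frac{\partial w^{ij}}{\partial x^k}\partial_{y^i}\wedge\partial_{y^j}$. For a Poisson manifold $(N,\Pi)$ with volume form $\mu$, the Hamiltonian vector field is $X_f=\{f,\cdot\}_\Pi$ (on $M$: $X_f=\frac{\partial f}{\partial x^i}w^{ij}\partial_{x^j}$), the divergence is defined by $\mathcal L_X\mu=(\mathrm{div}_\mu X)\mu$, and the modular vector field $\Delta_\mu$ is the vector field $f\mapsto\mathrm{div}_\mu X_f$. The vertical lift of $X=X^i\partial_{x^i}$ is $X^V=X^i\partial_{y^i}$. *)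

theory Defs
  imports "HOL-Analysis.Analysis"
begin

text \<open>A coordinate domain is an open set of real^'i;
 functions are real valued; vector fields are given by their component vectors;
 bivectors by their (skew) coefficient matrices, P x $ a $ b = Pi^{ab}, so that
 Pi = 1/2 Pi^{ab} d_a wedge d_b and {f,h} = Pi^{ab} d_a f d_b h.\<close>

definition partial :: "'i::finite \<Rightarrow> (real^'i \<Rightarrow> real) \<Rightarrow> real^'i \<Rightarrow> real" where
  "partial i f x = deriv (\<lambda>t. f (x + t *\<^sub>R axis i 1)) 0"

fun iter_partial :: "'i::finite list \<Rightarrow> (real^'i \<Rightarrow> real) \<Rightarrow> real^'i \<Rightarrow> real" where
  "iter_partial [] f = f"
| "iter_partial (i # is) f = partial i (iter_partial is f)"

definition smooth_on :: "(real^'i::finite) set \<Rightarrow> (real^'i \<Rightarrow> real) \<Rightarrow> bool" where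
  "smooth_on U f \<longleftrightarrow> (\<forall>is. iter_partial is f differentiable_on U)"

definition vf_apply :: "(real^'i::finite \<Rightarrow> real^'i) \<Rightarrow> (real^'i \<Rightarrow> real) \<Rightarrow> real^'i \<Rightarrow> real" where
  "vf_apply X f x = (\<Sum>a\<in>UNIV. X x $ a * partial a f x)"

text \<open>Hamiltonian vector field X_f = {f, .} = d_a f Pi^{ab} d_b.\<close>
definition ham_vf :: "(real^'i::finite \<Rightarrow> real^'i^'i) \<Rightarrow> (real^'i \<Rightarrow> real) \<Rightarrow> real^'i \<Rightarrow> real^'i" where
  "ham_vf P f x = (\<chi> b. \<Sum>a\<in>UNIV. partial a f x * P x $ a $ b)"

text \<open>Divergence w.r.t. the volume form rho dx^1 ... dx^m (rho > 0):
  L_X(rho dx) = (sum_b d_b(rho X^b)) dx.\<close>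
definition divergence :: "(real^'i::finite \<Rightarrow> real) \<Rightarrow> (real^'i \<Rightarrow> real^'i) \<Rightarrow> real^'i \<Rightarrow> real" where
  "divergence \<rho> X x = (\<Sum>b\<in>UNIV. partial b (\<lambda>z. \<rho> z * X z $ b) x) / \<rho> x"

definition modular_vf :: "(real^'i::finite \<Rightarrow> real^'i^'i) \<Rightarrow> (real^'i \<Rightarrow> real) \<Rightarrow> (real^'i \<Rightarrow> real) \<Rightarrow> real^'i \<Rightarrow> real" where
  "modular_vf P \<rho> f x = divergence \<rho> (ham_vf P f) x"

definition poisson_on :: "(real^'i::finite) set \<Rightarrow> (real^'i \<Rightarrow> real^'i^'i) \<Rightarrow> bool" where
  "poisson_on U P \<longleftrightarrow>
     (\<forall>a b. smooth_on U (\<lambda>x. P x $ a $ b)) \<and>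
     (\<forall>x\<in>U. \<forall>a b. P x $ a $ b = - P x $ b $ a) \<and>
     (\<forall>x\<in>U. \<forall>a b c. (\<Sum>l\<in>UNIV.
         P x $ l $ a * partial l (\<lambda>z. P z $ b $ c) x
       + P x $ l $ b * partial l (\<lambda>z. P z $ c $ a) x
       + P x $ l $ c * partial l (\<lambda>z. P z $ a $ b) x) = 0)"

definition riemannian_metric_on :: "(real^'i::finite) set \<Rightarrow> (real^'i \<Rightarrow> real^'i^'i) \<Rightarrow> bool" where
  "riemannian_metric_on U g \<longleftrightarrow>
     (\<forall>a b. smooth_on U (\<lambda>x. g x $ a $ b)) \<and>
     (\<forall>x\<in>U. transpose (g x) = g x \<and> (\<forall>v. v \<noteq> 0 \<longrightarrow> v \<bullet> (g x *v v) > 0))"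

text \<open>Induced coordinates on TM: p $ Inl i = x^i, p $ Inr i = y^i.\<close>
definition xpart :: "real^('n::finite + 'n) \<Rightarrow> real^'n" where
  "xpart p = (\<chi> i. p $ Inl i)"

definition ypart :: "real^('n::finite + 'n) \<Rightarrow> real^'n" where
  "ypart p = (\<chi> i. p $ Inr i)"

text \<open>Complete lift w^C = w^{ij} d_{x^i} wedge d_{y^j} + 1/2 y^k d_k w^{ij} d_{y^i} wedge d_{y^j},
  as a skew coefficient matrix on TM.\<close>
definition complete_lift :: "(real^'n::finite \<Rightarrow> real^'n^'n) \<Rightarrow> real^('n + 'n) \<Rightarrow> real^('n + 'n)^('n + 'n)" where
  "complete_lift w p = (\<chi> a b. case (a, b) of
       (Inl i, Inr j) \<Rightarrow> w (xpart p) $ i $ j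
     | (Inr j, Inl i) \<Rightarrow> - w (xpart p) $ i $ j
     | (Inr i, Inr j) \<Rightarrow> (\<Sum>k\<in>UNIV. ypart p $ k * partial k (\<lambda>z. w z $ i $ j) (xpart p))
     | (Inl i, Inl j) \<Rightarrow> 0)"

definition vertical_lift :: "(real^'n::finite \<Rightarrow> real^'n) \<Rightarrow> real^('n + 'n) \<Rightarrow> real^('n + 'n)" where
  "vertical_lift X p = (\<chi> a. case a of Inl i \<Rightarrow> 0 | Inr i \<Rightarrow> X (xpart p) $ i)"

end

theory Submission
  imports Defs
begin


lemma young_aux:
  fixes f :: "'a::real_normed_vector \<Rightarrow> real"
  assumes S: "open S" "x \<in> S"
    and hf: "\<And>z. z \<in> S \<Longrightarrow> (f has_derivative F z) (at z)"
    and gu: "\<And>z. z \<in> S \<Longrightarrow> gu z = F z u"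
    and Du: "(gu has_derivative Du) (at x)"
    and e: "e > 0"
  shows "\<exists>r>0. \<forall>h. 0 < h \<and> h < r \<longrightarrow>
     \<bar>(f (x + h *\<^sub>R u + h *\<^sub>R v) - f (x + h *\<^sub>R u) - f (x + h *\<^sub>R v) + f x) - h * h * Du v\<bar>
        \<le> e * h * h"
proof -
  define K where "K = 2 * norm u + norm v + 1"
  have K: "K > 0" unfolding K_def by (simp add: add_nonneg_pos)
  obtain r0 where r0: "r0 > 0" "ball x r0 \<subseteq> S" using S openE by blast
  have bl: "bounded_linear Du" using Du has_derivative_bounded_linear by blast
  obtain d where d: "d > 0" "\<And>y. norm (y - x) < d \<Longrightarrow>
        norm (gu y - gu x - Du (y - x)) \<le> (e / K) * norm (y - x)"
    using Du[unfolded has_derivative_at_alt] e K by (meson divide_pos_pos)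
  define r where "r = min r0 d / K"
  have r: "r > 0" unfolding r_def using r0 d K by simp
  show ?thesis
  proof (intro exI[of _ r] conjI r allI impI)
    fix h :: real assume h: "0 < h \<and> h < r"
    have hK: "h * (norm u + norm v) < min r0 d"
    proof -
      have "h * (norm u + norm v) \<le> h * K" using h unfolding K_def
        by (intro mult_left_mono) auto
      also have "\<dots> < r * K" using h K by simp
      also have "\<dots> = min r0 d" unfolding r_def using K by simp
      finally show ?thesis .
    qed
    have inS: "x + s *\<^sub>R u + t *\<^sub>R v \<in> S" if "0 \<le> s" "s \<le> h" "0 \<le> t" "t \<le> h" for s t
    proof -
      have "norm (s *\<^sub>R u + t *\<^sub>R v) \<le> norm (s *\<^sub>R u) + norm (t *\<^sub>R v)"
        by (rule norm_triangle_ineq)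
      also have "\<dots> = s * norm u + t * norm v" using that by simp
      also have "\<dots> \<le> h * (norm u + norm v)" using that
        by (simp add: distrib_left add_mono mult_right_mono)
      finally have "norm (s *\<^sub>R u + t *\<^sub>R v) < r0" using hK by simp
      then have "x + (s *\<^sub>R u + t *\<^sub>R v) \<in> ball x r0" by (metis add_diff_cancel_left' dist_norm mem_ball norm_minus_commute)
      then show ?thesis using r0 by (auto simp: add.assoc)
    qed
    define \<phi> where "\<phi> s = f (x + s *\<^sub>R u + h *\<^sub>R v) - f (x + s *\<^sub>R u)" for s
    have dphi: "(\<phi> has_real_derivative (gu (x + s *\<^sub>R u + h *\<^sub>R v) - gu (x + s *\<^sub>R u))) (at s)"
      if "0 \<le> s" "s \<le> h" for s
    proof -
      have s1: "x + s *\<^sub>R u + h *\<^sub>R v \<in> S" using inS[of s h] that h by simp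
      have s2: "x + s *\<^sub>R u \<in> S" using inS[of s 0] that h by simp
      have a1: "((\<lambda>t. f (x + t *\<^sub>R u + h *\<^sub>R v)) has_derivative (\<lambda>t. F (x + s *\<^sub>R u + h *\<^sub>R v) (t *\<^sub>R u))) (at s)"
      proof -
        have l1: "((\<lambda>t. x + t *\<^sub>R u + h *\<^sub>R v) has_derivative (\<lambda>t. t *\<^sub>R u)) (at s)"
          by (auto intro!: derivative_eq_intros)
        show ?thesis using has_derivative_compose[OF l1, of f] hf[OF s1] by simp
      qed
      have a2: "((\<lambda>t. f (x + t *\<^sub>R u)) has_derivative (\<lambda>t. F (x + s *\<^sub>R u) (t *\<^sub>R u))) (at s)"
      proof -
        have l1: "((\<lambda>t. x + t *\<^sub>R u) has_derivative (\<lambda>t. t *\<^sub>R u)) (at s)"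
          by (auto intro!: derivative_eq_intros)
        show ?thesis using has_derivative_compose[OF l1, of f] hf[OF s2] by simp
      qed
      have "(\<phi> has_derivative (\<lambda>t. F (x + s *\<^sub>R u + h *\<^sub>R v) (t *\<^sub>R u) - F (x + s *\<^sub>R u) (t *\<^sub>R u))) (at s)"
        unfolding \<phi>_def by (rule has_derivative_diff[OF a1 a2])
      moreover have "bounded_linear (F z)" if "z \<in> S" for z using hf[OF that] has_derivative_bounded_linear by blast
      ultimately show ?thesis using s1 s2 gu
        by (intro has_derivative_imp_has_field_derivative) (auto simp: linear_simps right_diff_distrib)
    qed
    obtain \<xi> where xi: "0 < \<xi>" "\<xi> < h" "\<phi> h - \<phi> 0 = (h - 0) * (gu (x + \<xi> *\<^sub>R u + h *\<^sub>R v) - gu (x + \<xi> *\<^sub>R u))"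
      using MVT2[of 0 h \<phi>, OF _ dphi] h by auto
    have n1: "norm ((x + \<xi> *\<^sub>R u + h *\<^sub>R v) - x) \<le> h * (norm u + norm v)"
    proof -
      have "norm (\<xi> *\<^sub>R u + h *\<^sub>R v) \<le> norm (\<xi> *\<^sub>R u) + norm (h *\<^sub>R v)"
        by (rule norm_triangle_ineq)
      also have "\<dots> = \<xi> * norm u + h * norm v" using xi h by simp
      also have "\<dots> \<le> h * (norm u + norm v)" using xi h
        by (simp add: distrib_left add_mono mult_right_mono)
      finally show ?thesis by (simp add: add.assoc)
    qed
    have n2: "norm ((x + \<xi> *\<^sub>R u) - x) \<le> h * norm u"
      using xi h by (simp add: mult_right_mono)
    have B1: "norm (gu (x + \<xi> *\<^sub>R u + h *\<^sub>R v) - gu x - Du ((x + \<xi> *\<^sub>R u + h *\<^sub>R v) - x)) \<le> (e/K) * (h * (norm u + norm v))"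
    proof -
      have "norm ((x + \<xi> *\<^sub>R u + h *\<^sub>R v) - x) < d" using n1 hK by linarith
      from d(2)[OF this] show ?thesis using n1 e K
        by (smt (verit, best) divide_pos_pos mult_left_mono)
    qed
    have B2: "norm (gu (x + \<xi> *\<^sub>R u) - gu x - Du ((x + \<xi> *\<^sub>R u) - x)) \<le> (e/K) * (h * norm u)"
    proof -
      have "h * norm u \<le> h * (norm u + norm v)" using h by simp
      then have "norm ((x + \<xi> *\<^sub>R u) - x) < d" using n2 hK by linarith
      from d(2)[OF this] show ?thesis using n2 e K
        by (smt (verit, best) divide_pos_pos mult_left_mono)
    qed
    have lin: "Du ((x + \<xi> *\<^sub>R u + h *\<^sub>R v) - x) - Du ((x + \<xi> *\<^sub>R u) - x) = h * Du v"
      using bl by (simp add: linear_simps algebra_simps)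
    have "\<bar>(gu (x + \<xi> *\<^sub>R u + h *\<^sub>R v) - gu (x + \<xi> *\<^sub>R u)) - h * Du v\<bar>
          \<le> (e/K) * (h * (norm u + norm v)) + (e/K) * (h * norm u)"
      using B1 B2 lin by (simp add: abs_le_iff) linarith?
    also have "\<dots> \<le> e * h"
    proof -
      have "(e/K) * (h * (norm u + norm v)) + (e/K) * (h * norm u) = (e/K) * h * (2 * norm u + norm v)"
        by (simp add: algebra_simps)
      also have "\<dots> \<le> (e/K) * h * K" unfolding K_def using e K h
        by (intro mult_left_mono) auto
      also have "\<dots> = e * h" using K by simp
      finally show ?thesis .
    qed
    finally have C: "\<bar>(gu (x + \<xi> *\<^sub>R u + h *\<^sub>R v) - gu (x + \<xi> *\<^sub>R u)) - h * Du v\<bar> \<le> e * h" .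
    have "(f (x + h *\<^sub>R u + h *\<^sub>R v) - f (x + h *\<^sub>R u) - f (x + h *\<^sub>R v) + f x) = \<phi> h - \<phi> 0"
      unfolding \<phi>_def by simp
    also have "\<dots> = h * (gu (x + \<xi> *\<^sub>R u + h *\<^sub>R v) - gu (x + \<xi> *\<^sub>R u))" using xi by simp
    finally have eqd: "f (x + h *\<^sub>R u + h *\<^sub>R v) - f (x + h *\<^sub>R u) - f (x + h *\<^sub>R v) + f x = h * (gu (x + \<xi> *\<^sub>R u + h *\<^sub>R v) - gu (x + \<xi> *\<^sub>R u))" .
    have "\<bar>(f (x + h *\<^sub>R u + h *\<^sub>R v) - f (x + h *\<^sub>R u) - f (x + h *\<^sub>R v) + f x) - h * h * Du v\<bar>
        = h * \<bar>(gu (x + \<xi> *\<^sub>R u + h *\<^sub>R v) - gu (x + \<xi> *\<^sub>R u)) - h * Du v\<bar>"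
    proof -
      have "\<And>a b c. \<bar>h * (a - b) - h * h * c\<bar> = h * \<bar>a - b - h * c\<bar>"
      proof -
        fix a b c
        have "h * (a - b) - h * h * c = h * (a - b - h * c)" by (simp add: algebra_simps)
        then show "\<bar>h * (a - b) - h * h * c\<bar> = h * \<bar>a - b - h * c\<bar>" using h by (simp add: abs_mult)
      qed
      then show ?thesis unfolding eqd .
    qed
    also have "\<dots> \<le> h * (e * h)" using C h by (intro mult_left_mono) auto
    finally show "\<bar>(f (x + h *\<^sub>R u + h *\<^sub>R v) - f (x + h *\<^sub>R u) - f (x + h *\<^sub>R v) + f x) - h * h * Du v\<bar> \<le> e * h * h"
      by (simp add: mult_ac)
  qed
qed

lemma young:
  fixes f :: "'a::real_normed_vector \<Rightarrow> real"
  assumes S: "open S" "x \<in> S"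
    and hf: "\<And>z. z \<in> S \<Longrightarrow> (f has_derivative F z) (at z)"
    and gu: "\<And>z. z \<in> S \<Longrightarrow> gu z = F z u"
    and gv: "\<And>z. z \<in> S \<Longrightarrow> gv z = F z v"
    and Du: "(gu has_derivative Du) (at x)"
    and Dv: "(gv has_derivative Dv) (at x)"
  shows "Du v = Dv u"
proof -
  have "\<bar>Du v - Dv u\<bar> \<le> 2 * e" if e: "e > 0" for e
  proof -
    obtain r1 where r1: "r1 > 0" "\<And>h. 0 < h \<and> h < r1 \<Longrightarrow>
     \<bar>(f (x + h *\<^sub>R u + h *\<^sub>R v) - f (x + h *\<^sub>R u) - f (x + h *\<^sub>R v) + f x) - h * h * Du v\<bar> \<le> e * h * h"
      using young_aux[OF S hf gu Du e, of v] by blast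
    obtain r2 where r2: "r2 > 0" "\<And>h. 0 < h \<and> h < r2 \<Longrightarrow>
     \<bar>(f (x + h *\<^sub>R v + h *\<^sub>R u) - f (x + h *\<^sub>R v) - f (x + h *\<^sub>R u) + f x) - h * h * Dv u\<bar> \<le> e * h * h"
      using young_aux[OF S hf gv Dv e, of u] by blast
    define h where "h = min r1 r2 / 2"
    have h: "0 < h" "h < r1" "h < r2" unfolding h_def using r1 r2 by auto
    have c: "x + h *\<^sub>R v + h *\<^sub>R u = x + h *\<^sub>R u + h *\<^sub>R v" by (simp add: add_ac)
    have A: "\<bar>(f (x + h *\<^sub>R u + h *\<^sub>R v) - f (x + h *\<^sub>R u) - f (x + h *\<^sub>R v) + f x) - h * h * Du v\<bar> \<le> e * h * h"
      using r1(2) h by blast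
    have B: "\<bar>(f (x + h *\<^sub>R u + h *\<^sub>R v) - f (x + h *\<^sub>R u) - f (x + h *\<^sub>R v) + f x) - h * h * Dv u\<bar> \<le> e * h * h"
      using r2(2)[of h] h unfolding c by linarith
    have "h * h * \<bar>Du v - Dv u\<bar> = \<bar>h * h * Du v - h * h * Dv u\<bar>"
    proof -
      have "h * h * Du v - h * h * Dv u = (h * h) * (Du v - Dv u)" by (simp add: algebra_simps)
      then show ?thesis using h by (simp add: abs_mult)
    qed
    also have "\<dots> \<le> h * h * (2 * e)"
    proof -
      have "h * h * (2 * e) = 2 * (e * h * h)" by simp
      moreover have "\<And>Q a b E::real. \<bar>Q - a\<bar> \<le> E \<Longrightarrow> \<bar>Q - b\<bar> \<le> E \<Longrightarrow> \<bar>a - b\<bar> \<le> 2 * E" by arith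
      ultimately show ?thesis using A B by metis
    qed
    finally show ?thesis using h by (simp add: mult_le_cancel_left_pos)
  qed
  note le2 = this
  have "\<bar>Du v - Dv u\<bar> \<le> 0"
  proof (rule field_le_epsilon)
    fix e :: real assume "e > 0"
    then have "\<bar>Du v - Dv u\<bar> \<le> 2 * (e / 2)" using le2[of "e / 2"] by simp
    then show "\<bar>Du v - Dv u\<bar> \<le> 0 + e" by simp
  qed
  then show ?thesis by simp
qed

lemma partial_has:
  fixes f :: "real^'i::finite \<Rightarrow> real"
  assumes "(f has_derivative f') (at x)"
  shows "((\<lambda>t. f (x + t *\<^sub>R axis i 1)) has_real_derivative f' (axis i 1)) (at 0)"
proof -
  have l1: "((\<lambda>t. x + t *\<^sub>R axis i 1) has_derivative (\<lambda>t. t *\<^sub>R axis i 1)) (at 0)"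
    by (auto intro!: derivative_eq_intros)
  have "((\<lambda>t. f (x + t *\<^sub>R axis i 1)) has_derivative (\<lambda>t. f' (t *\<^sub>R axis i 1))) (at 0)"
    using has_derivative_compose[OF l1, of f] assms by simp
  moreover have "bounded_linear f'" using assms has_derivative_bounded_linear by blast
  ultimately show ?thesis
    by (intro has_derivative_imp_has_field_derivative) (auto simp: linear_simps)
qed

lemma partial_eq:
  fixes f :: "real^'i::finite \<Rightarrow> real"
  assumes "(f has_derivative f') (at x)"
  shows "partial i f x = f' (axis i 1)"
  unfolding partial_def using partial_has[OF assms] by (rule DERIV_imp_deriv)

lemma partial_swap:
  fixes f :: "real^'i::finite \<Rightarrow> real"
  assumes S: "open S" "x \<in> S"
    and hf: "\<And>z. z \<in> S \<Longrightarrow> f differentiable (at z)"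
    and hi: "partial i f differentiable (at x)"
    and hj: "partial j f differentiable (at x)"
  shows "partial j (partial i f) x = partial i (partial j f) x"
proof -
  define F where "F z = frechet_derivative f (at z)" for z
  have hF: "(f has_derivative F z) (at z)" if "z \<in> S" for z
    unfolding F_def using hf[OF that] frechet_derivative_works by blast
  obtain Di where Di: "(partial i f has_derivative Di) (at x)" using hi differentiable_def by blast
  obtain Dj where Dj: "(partial j f has_derivative Dj) (at x)" using hj differentiable_def by blast
  have "Di (axis j 1) = Dj (axis i 1)"
    by (rule young[OF S hF _ _ Di Dj]) (auto intro: partial_eq hF)
  then show ?thesis using partial_eq[OF Di] partial_eq[OF Dj] by simp
qed

lemma partial_add:
  fixes f g :: "real^'i::finite \<Rightarrow> real"
  assumes "f differentiable (at x)" "g differentiable (at x)"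
  shows "partial i (\<lambda>z. f z + g z) x = partial i f x + partial i g x"
proof -
  obtain F G where F: "(f has_derivative F) (at x)" and G: "(g has_derivative G) (at x)"
    using assms differentiable_def by blast
  show ?thesis using partial_eq[OF has_derivative_add[OF F G]] partial_eq[OF F] partial_eq[OF G] by simp
qed

lemma partial_diff:
  fixes f g :: "real^'i::finite \<Rightarrow> real"
  assumes "f differentiable (at x)" "g differentiable (at x)"
  shows "partial i (\<lambda>z. f z - g z) x = partial i f x - partial i g x"
proof -
  obtain F G where F: "(f has_derivative F) (at x)" and G: "(g has_derivative G) (at x)"
    using assms differentiable_def by blast
  show ?thesis using partial_eq[OF has_derivative_diff[OF F G]] partial_eq[OF F] partial_eq[OF G] by simp
qed

lemma partial_minus:
  fixes f :: "real^'i::finite \<Rightarrow> real"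
  assumes "f differentiable (at x)"
  shows "partial i (\<lambda>z. - f z) x = - partial i f x"
proof -
  obtain F where F: "(f has_derivative F) (at x)"
    using assms differentiable_def by blast
  show ?thesis using partial_eq[OF has_derivative_minus[OF F]] partial_eq[OF F] by simp
qed

lemma partial_mult:
  fixes f g :: "real^'i::finite \<Rightarrow> real"
  assumes "f differentiable (at x)" "g differentiable (at x)"
  shows "partial i (\<lambda>z. f z * g z) x = f x * partial i g x + partial i f x * g x"
proof -
  obtain F G where F: "(f has_derivative F) (at x)" and G: "(g has_derivative G) (at x)"
    using assms differentiable_def by blast
  show ?thesis using partial_eq[OF has_derivative_mult[OF F G]] partial_eq[OF F] partial_eq[OF G] by simp
qed

lemma partial_const: "partial i (\<lambda>z::real^'i::finite. c::real) x = 0"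
  unfolding partial_def by simp

lemma partial_sum:
  fixes f :: "'a \<Rightarrow> real^'i::finite \<Rightarrow> real"
  assumes "\<And>a. a \<in> A \<Longrightarrow> f a differentiable (at x)"
  shows "partial i (\<lambda>z. \<Sum>a\<in>A. f a z) x = (\<Sum>a\<in>A. partial i (f a) x)"
proof -
  define F where "F a = frechet_derivative (f a) (at x)" for a
  have F: "(f a has_derivative F a) (at x)" if "a \<in> A" for a
    unfolding F_def using assms[OF that] frechet_derivative_works by blast
  show ?thesis using partial_eq[OF has_derivative_sum[OF F]] partial_eq[OF F] by simp
qed

lemma partial_comp:
  fixes D :: "real^'i::finite \<Rightarrow> real"
  assumes "D differentiable (at x)" "(\<phi> has_real_derivative c) (at (D x))"
  shows "partial i (\<lambda>z. \<phi> (D z)) x = partial i D x * c"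
proof -
  obtain F where F: "(D has_derivative F) (at x)"
    using assms differentiable_def by blast
  show ?thesis using partial_eq[OF DERIV_compose_FDERIV[OF assms(2) F]] partial_eq[OF F] by simp
qed

lemma diff_comp:
  fixes D :: "real^'i::finite \<Rightarrow> real"
  assumes "D differentiable (at x)" "(\<phi> has_real_derivative c) (at (D x))"
  shows "(\<lambda>z. \<phi> (D z)) differentiable (at x)"
proof -
  obtain F where F: "(D has_derivative F) (at x)"
    using assms differentiable_def by blast
  show ?thesis using DERIV_compose_FDERIV[OF assms(2) F] differentiable_def by blast
qed

lemma det_differentiable:
  fixes M :: "'a::real_normed_vector \<Rightarrow> real^'n::finite^'n"
  assumes "\<And>i j. (\<lambda>z. M z $ i $ j) differentiable (at x within S)"
  shows "(\<lambda>z. det (M z)) differentiable (at x within S)"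
proof -
  have "(\<lambda>z. \<Prod>i\<in>UNIV. M z $ i $ p i) differentiable (at x within S)" for p :: "'n \<Rightarrow> 'n"
  proof -
    define F where "F i = frechet_derivative (\<lambda>z. M z $ i $ p i) (at x within S)" for i
    have "((\<lambda>z. M z $ i $ p i) has_derivative F i) (at x within S)" for i
      unfolding F_def using assms frechet_derivative_works by blast
    then have "((\<lambda>z. \<Prod>i\<in>UNIV. M z $ i $ p i) has_derivative (\<lambda>y. \<Sum>i\<in>UNIV. F i y * (\<Prod>j\<in>UNIV - {i}. M x $ j $ p j))) (at x within S)"
      by (intro has_derivative_prod) auto
    then show ?thesis unfolding differentiable_def by blast
  qed
  then show ?thesis unfolding det_def
    by (intro differentiable_sum differentiable_mult differentiable_const) auto
qed

lemma pd_det_nz: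
  fixes A :: "real^'n::finite^'n"
  assumes "\<And>v. v \<noteq> 0 \<Longrightarrow> v \<bullet> (A *v v) > 0"
  shows "det A \<noteq> 0"
proof -
  have "inj ((*v) A)"
  proof (rule injI)
    fix a b assume "A *v a = A *v b"
    then have "A *v (a - b) = 0" by (simp add: matrix_vector_mult_diff_distrib)
    then show "a = b" using assms[of "a - b"] by (cases "a - b = 0") auto
  qed
  then show ?thesis using det_nz_iff_inj[OF matrix_vector_mul_linear[of A]]
    by (simp add: matrix_of_matrix_vector_mul)
qed

lemma pd_det_pos:
  fixes G :: "real^'n::finite^'n"
  assumes pd: "\<forall>v. v \<noteq> 0 \<longrightarrow> v \<bullet> (G *v v) > 0"
  shows "det G > 0"
proof (rule ccontr)
  assume neg: "\<not> det G > 0"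
  define M where "M t = t *\<^sub>R mat 1 + (1 - t) *\<^sub>R G" for t :: real
  have nz: "det (M t) \<noteq> 0" if "0 \<le> t" "t \<le> 1" for t
  proof (rule pd_det_nz)
    fix v :: "real^'n" assume v: "v \<noteq> 0"
    have "v \<bullet> (M t *v v) = t * (v \<bullet> v) + (1 - t) * (v \<bullet> (G *v v))"
      unfolding M_def by (simp add: matrix_vector_mult_add_rdistrib scaleR_matrix_vector_assoc[symmetric] inner_add_right)
    moreover have "v \<bullet> v > 0" using v by simp
    moreover have "v \<bullet> (G *v v) > 0" using pd v by blast
    ultimately show "v \<bullet> (M t *v v) > 0" using that
    proof (cases "t = 0")
      case False
      assume e: "v \<bullet> (M t *v v) = t * (v \<bullet> v) + (1 - t) * (v \<bullet> (G *v v))"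
        "v \<bullet> v > 0" "v \<bullet> (G *v v) > 0"
      have "t * (v \<bullet> v) > 0" using False that e by simp
      moreover have "(1 - t) * (v \<bullet> (G *v v)) \<ge> 0" using that e by simp
      ultimately show ?thesis using e by linarith
    qed simp
  qed
  have cont: "continuous_on {0..1} (\<lambda>t. det (M t))"
  proof (rule differentiable_imp_continuous_on)
    show "(\<lambda>t. det (M t)) differentiable_on {0..1}"
      unfolding differentiable_on_def M_def
      by (intro ballI det_differentiable) (simp add: mat_def)
  qed
  have "\<exists>t\<ge>0. t \<le> 1 \<and> det (M t) = 0"
    by (rule IVT'[OF _ _ _ cont]) (use neg in \<open>auto simp: M_def det_I\<close>)
  then show False using nz by blast
qed

lemma sym_skew_sum:
  fixes S A :: "'a \<Rightarrow> 'a \<Rightarrow> real"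
  assumes "\<And>i j. i \<in> I \<Longrightarrow> j \<in> I \<Longrightarrow> S i j = S j i"
    and "\<And>i j. i \<in> I \<Longrightarrow> j \<in> I \<Longrightarrow> A i j = - A j i"
  shows "(\<Sum>i\<in>I. \<Sum>j\<in>I. S i j * A i j) = 0"
proof -
  have "(\<Sum>i\<in>I. \<Sum>j\<in>I. S i j * A i j) = (\<Sum>j\<in>I. \<Sum>i\<in>I. S i j * A i j)"
    by (rule sum.swap)
  also have "\<dots> = (\<Sum>j\<in>I. \<Sum>i\<in>I. - (S j i * A j i))"
  proof (intro sum.cong refl)
    fix j i assume ij: "j \<in> I" "i \<in> I"
    have e1: "S i j = S j i" using assms(1) ij by blast
    have e2: "A i j = - A j i" using assms(2) ij by blast
    show "S i j * A i j = - (S j i * A j i)" unfolding e1 e2 by simp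
  qed
  also have "\<dots> = - (\<Sum>i\<in>I. \<Sum>j\<in>I. S i j * A i j)"
    by (simp add: sum_negf)
  finally show ?thesis by simp
qed

lemma smooth_diff:
  assumes "open U" "smooth_on U h" "z \<in> U"
  shows "iter_partial is h differentiable (at z)"
  using assms unfolding smooth_on_def
  by (meson differentiable_on_eq_differentiable_at)

lemma ln_sqrt_deriv:
  assumes "d > (0::real)"
  shows "((\<lambda>s. ln (sqrt s)) has_real_derivative 1 / (2 * d)) (at d)"
proof -
  have "((\<lambda>s. ln (sqrt s)) has_real_derivative (1 / sqrt d) * (inverse (sqrt d) / 2)) (at d)"
    using assms by (intro DERIV_chain2[OF DERIV_ln_divide DERIV_real_sqrt]) auto
  moreover have "(1 / sqrt d) * (inverse (sqrt d) / 2) = 1 / (2 * d)"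
    using assms by (simp add: field_simps)
  ultimately show ?thesis by simp
qed


lemma sum_UNIV_Plus:
  fixes f :: "'a::finite + 'b::finite \<Rightarrow> 'c::comm_monoid_add"
  shows "(\<Sum>a\<in>UNIV. f a) = (\<Sum>i\<in>UNIV. f (Inl i)) + (\<Sum>i\<in>UNIV. f (Inr i))"
  using sum.Plus[of "UNIV::'a set" "UNIV::'b set" f] by (simp add: UNIV_Plus_UNIV o_def)

lemma xpart_linear: "bounded_linear (xpart :: real^('n::finite + 'n) \<Rightarrow> real^'n)"
proof -
  have "linear (xpart :: real^('n::finite + 'n) \<Rightarrow> real^'n)"
    by (rule linearI) (auto simp: xpart_def vec_eq_iff)
  then show ?thesis by (simp add: linear_conv_bounded_linear)
qed

lemma ypart_linear: "bounded_linear (ypart :: real^('n::finite + 'n) \<Rightarrow> real^'n)"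
proof -
  have "linear (ypart :: real^('n::finite + 'n) \<Rightarrow> real^'n)"
    by (rule linearI) (auto simp: ypart_def vec_eq_iff)
  then show ?thesis by (simp add: linear_conv_bounded_linear)
qed

lemma xpart_axis [simp]:
  "xpart (axis (Inl k) 1 :: real^('n::finite + 'n)) = axis k 1"
  "xpart (axis (Inr k) 1 :: real^('n::finite + 'n)) = 0"
  by (auto simp: xpart_def vec_eq_iff axis_def)

lemma ypart_axis [simp]:
  "ypart (axis (Inr k) 1 :: real^('n::finite + 'n)) = axis k 1"
  "ypart (axis (Inl k) 1 :: real^('n::finite + 'n)) = 0"
  by (auto simp: ypart_def vec_eq_iff axis_def)

lemma xcomp_has:
  fixes h :: "real^'n::finite \<Rightarrow> real"
  assumes "(h has_derivative H) (at (xpart p))"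
  shows "((\<lambda>z. h (xpart z)) has_derivative (\<lambda>v. H (xpart v))) (at p)"
proof -
  have "(xpart has_derivative xpart) (at p)"
    using xpart_linear by (rule bounded_linear_imp_has_derivative)
  from has_derivative_compose[OF this assms] show ?thesis by simp
qed

lemma xcomp_diff:
  fixes h :: "real^'n::finite \<Rightarrow> real"
  assumes "h differentiable (at (xpart p))"
  shows "(\<lambda>z. h (xpart z)) differentiable (at p)"
  using assms xcomp_has unfolding differentiable_def by blast

lemma xcomp_partial:
  fixes h :: "real^'n::finite \<Rightarrow> real"
  assumes "h differentiable (at (xpart p))"
  shows "partial (Inl k) (\<lambda>z. h (xpart z)) p = partial k h (xpart p)"
    "partial (Inr k) (\<lambda>z. h (xpart z)) p = 0"
proof -
  obtain H where H: "(h has_derivative H) (at (xpart p))" using assms differentiable_def by blast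
  have bl: "bounded_linear H" using H has_derivative_bounded_linear by blast
  show "partial (Inl k) (\<lambda>z. h (xpart z)) p = partial k h (xpart p)"
    using partial_eq[OF xcomp_has[OF H]] partial_eq[OF H] by simp
  show "partial (Inr k) (\<lambda>z. h (xpart z)) p = 0"
    using partial_eq[OF xcomp_has[OF H]] bl by (simp add: linear_simps)
qed

lemma ycomp_has:
  "((\<lambda>z. ypart z $ j) has_derivative (\<lambda>v. ypart v $ j)) (at (p :: real^('n::finite + 'n)))"
proof -
  have "bounded_linear (\<lambda>v::real^('n + 'n). ypart v $ j)"
    using bounded_linear_compose[OF bounded_linear_vec_nth[of j] ypart_linear] by simp
  then show ?thesis by (rule bounded_linear_imp_has_derivative)
qed

lemma ycomp_diff: "(\<lambda>z. ypart z $ j) differentiable (at (p :: real^('n::finite + 'n)))"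
  using ycomp_has unfolding differentiable_def by blast

lemma ycomp_partial:
  "partial (Inr k) (\<lambda>z. ypart z $ j) (p :: real^('n::finite + 'n)) = (if k = j then 1 else 0)"
  "partial (Inl k) (\<lambda>z. ypart z $ j) (p :: real^('n::finite + 'n)) = 0"
  using partial_eq[OF ycomp_has[of j p]] by (simp_all add: ypart_def axis_def)

lemma partial_local:
  fixes f g :: "real^'i::finite \<Rightarrow> real"
  assumes "open S" "x \<in> S" "\<And>z. z \<in> S \<Longrightarrow> f z = g z" "g differentiable (at x)"
  shows "partial i f x = partial i g x"
proof -
  obtain G where G: "(g has_derivative G) (at x)" using assms differentiable_def by blast
  have "(f has_derivative G) (at x)"
    by (rule has_derivative_transform_within_open[OF G assms(1,2)]) (use assms(3) in auto)
  then show ?thesis using partial_eq[OF G] partial_eq by metis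
qed


lemma alg2:
  fixes Fy Fx :: "'n::finite \<Rightarrow> real" and Fyx Fxy Fyy W C :: "'n \<Rightarrow> 'n \<Rightarrow> real"
    and W' :: "'n \<Rightarrow> 'n \<Rightarrow> 'n \<Rightarrow> real" and D' XRp :: "'n \<Rightarrow> real" and d :: real
  assumes sw: "\<And>i j. Fyx i j = Fxy j i" and yy: "\<And>i j. Fyy i j = Fyy j i"
    and Ws: "\<And>i j. W i j = - W j i" and W's: "\<And>k i j. W' k i j = - W' k j i"
    and Cs: "\<And>i j. C i j = - C j i" and d: "d > 0"
  shows "((\<Sum>j\<in>UNIV. d * - (\<Sum>i\<in>UNIV. Fy i * W' j j i + Fyx i j * W j i) + D' j * - (\<Sum>i\<in>UNIV. Fy i * W j i))
       + (\<Sum>j\<in>UNIV. d * ((\<Sum>i\<in>UNIV. Fx i * 0 + Fxy i j * W i j) + (\<Sum>i\<in>UNIV. Fy i * W' j i j + Fyy i j * C i j)) + 0 * XRp j)) / d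
     = (\<Sum>i\<in>UNIV. 2 * (\<Sum>k\<in>UNIV. W' k i k + W i k * (D' k * (1 / (2 * d)))) * Fy i)"
proof -
  define T1 where "T1 = (\<Sum>j\<in>UNIV. \<Sum>i\<in>UNIV. Fyx i j * W j i)"
  define T2 where "T2 = (\<Sum>j\<in>UNIV. \<Sum>i\<in>UNIV. Fxy i j * W i j)"
  define T3 where "T3 = (\<Sum>j\<in>UNIV. \<Sum>i\<in>UNIV. Fyy i j * C i j)"
  have T12: "T1 = T2"
  proof -
    have "T1 = (\<Sum>j\<in>UNIV. \<Sum>i\<in>UNIV. Fxy j i * W j i)" unfolding T1_def sw ..
    also have "\<dots> = T2" unfolding T2_def by (rule sum.swap)
    finally show ?thesis .
  qed
  have T3: "T3 = 0" unfolding T3_def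
    by (rule sym_skew_sum) (rule yy, rule Cs)
  define N where "N = (\<Sum>j\<in>UNIV. d * - (\<Sum>i\<in>UNIV. Fy i * W' j j i + Fyx i j * W j i) + D' j * - (\<Sum>i\<in>UNIV. Fy i * W j i))
       + (\<Sum>j\<in>UNIV. d * ((\<Sum>i\<in>UNIV. Fx i * 0 + Fxy i j * W i j) + (\<Sum>i\<in>UNIV. Fy i * W' j i j + Fyy i j * C i j)) + 0 * XRp j)"
  have N1: "N = d * (\<Sum>j\<in>UNIV. \<Sum>i\<in>UNIV. Fy i * W' j i j - Fy i * W' j j i) - d * T1 + d * T2 + d * T3
      - (\<Sum>j\<in>UNIV. \<Sum>i\<in>UNIV. D' j * (Fy i * W j i))"
    unfolding N_def T1_def T2_def T3_def
    by (simp add: sum.distrib sum_subtractf sum_distrib_left sum_negf algebra_simps)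
  also have "\<dots> = (\<Sum>j\<in>UNIV. \<Sum>i\<in>UNIV. d * (2 * (Fy i * W' j i j)) + D' j * (Fy i * W i j))"
  proof -
    have a: "(\<Sum>j\<in>UNIV. \<Sum>i\<in>UNIV. Fy i * W' j i j - Fy i * W' j j i) = (\<Sum>j\<in>UNIV. \<Sum>i\<in>UNIV. 2 * (Fy i * W' j i j))"
    proof (intro sum.cong refl)
      fix j i
      show "Fy i * W' j i j - Fy i * W' j j i = 2 * (Fy i * W' j i j)"
        using W's[of j j i] by simp
    qed
    have b: "- (\<Sum>j\<in>UNIV. \<Sum>i\<in>UNIV. D' j * (Fy i * W j i)) = (\<Sum>j\<in>UNIV. \<Sum>i\<in>UNIV. D' j * (Fy i * W i j))"
      unfolding sum_negf[symmetric]
    proof (intro sum.cong refl)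
      fix j i
      show "- (D' j * (Fy i * W j i)) = D' j * (Fy i * W i j)"
        using Ws[of j i] by simp
    qed
    show ?thesis unfolding a T12 T3 using b
      by (simp add: sum.distrib sum_distrib_left)
  qed
  also have "\<dots> = (\<Sum>i\<in>UNIV. \<Sum>j\<in>UNIV. d * (2 * (Fy i * W' j i j)) + D' j * (Fy i * W i j))"
    by (rule sum.swap)
  also have "\<dots> = (\<Sum>i\<in>UNIV. d * (2 * (\<Sum>k\<in>UNIV. W' k i k + W i k * (D' k * (1 / (2 * d)))) * Fy i))"
  proof (intro sum.cong refl)
    fix i
    have "(\<Sum>j\<in>UNIV. d * (2 * (Fy i * W' j i j)) + D' j * (Fy i * W i j))
        = (\<Sum>j\<in>UNIV. d * (2 * (W' j i j + W i j * (D' j * (1 / (2 * d)))) * Fy i))"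
    proof (intro sum.cong refl)
      fix j
      show "d * (2 * (Fy i * W' j i j)) + D' j * (Fy i * W i j) = d * (2 * (W' j i j + W i j * (D' j * (1 / (2 * d)))) * Fy i)"
        using d by (simp add: field_simps)
    qed
    also have "\<dots> = d * (2 * (\<Sum>k\<in>UNIV. W' k i k + W i k * (D' k * (1 / (2 * d)))) * Fy i)"
      by (simp add: sum_distrib_left sum_distrib_right mult_ac)
    finally show "(\<Sum>j\<in>UNIV. d * (2 * (Fy i * W' j i j)) + D' j * (Fy i * W i j)) = d * (2 * (\<Sum>k\<in>UNIV. W' k i k + W i k * (D' k * (1 / (2 * d)))) * Fy i)" .
  qed
  also have "\<dots> = d * (\<Sum>i\<in>UNIV. 2 * (\<Sum>k\<in>UNIV. W' k i k + W i k * (D' k * (1 / (2 * d)))) * Fy i)"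
    by (simp add: sum_distrib_left mult.assoc)
  finally have "N = d * (\<Sum>i\<in>UNIV. 2 * (\<Sum>k\<in>UNIV. W' k i k + W i k * (D' k * (1 / (2 * d)))) * Fy i)" .
  then show ?thesis unfolding N_def[symmetric] using d by simp
qed




lemma part1:
  fixes U :: "(real^'n::finite) set"
    and w :: "real^'n \<Rightarrow> real^'n^'n"
    and g :: "real^'n \<Rightarrow> real^'n^'n"
  assumes U: "open U" and P: "poisson_on U w" and R: "riemannian_metric_on U g"
    and f: "smooth_on U f" and x: "x \<in> U"
  shows "modular_vf w (\<lambda>x. sqrt (det (g x))) f x =
         vf_apply (\<lambda>x. \<chi> i. \<Sum>k\<in>UNIV. partial k (\<lambda>z. w z $ i $ k) x
                     + w x $ i $ k * partial k (\<lambda>z. ln (sqrt (det (g z)))) x) f x"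
proof -
  have wsm: "smooth_on U (\<lambda>z. w z $ a $ b)" for a b using P unfolding poisson_on_def by blast
  have wskew: "w x $ a $ b = - w x $ b $ a" for a b using P x unfolding poisson_on_def by blast
  have gsm: "smooth_on U (\<lambda>z. g z $ a $ b)" for a b using R unfolding riemannian_metric_on_def by blast
  have gpd: "\<forall>v. v \<noteq> 0 \<longrightarrow> v \<bullet> (g x *v v) > 0" using R x unfolding riemannian_metric_on_def by blast
  have wd: "(\<lambda>z. w z $ a $ b) differentiable (at x)" for a b
    using smooth_diff[OF U wsm x, of "[]"] by simp
  have fd: "f differentiable (at z)" if "z \<in> U" for z
    using smooth_diff[OF U f that, of "[]"] by simp
  have fad: "partial a f differentiable (at x)" for a
    using smooth_diff[OF U f x, of "[a]"] by simp
  have Dd: "(\<lambda>z. det (g z)) differentiable (at x)"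
    by (rule det_differentiable) (use smooth_diff[OF U gsm x, of "[]"] in simp)
  define d where "d = det (g x)"
  have dpos: "d > 0" unfolding d_def by (rule pd_det_pos[OF gpd])
  define D' where "D' b = partial b (\<lambda>z. det (g z)) x" for b
  define fa where "fa a = partial a f x" for a
  define fab where "fab b a = partial b (partial a f) x" for a b
  define W where "W a b = w x $ a $ b" for a b
  define W' where "W' b a c = partial b (\<lambda>z. w z $ a $ c) x" for a b c
  have sqd: "((\<lambda>s. sqrt s) has_real_derivative inverse (sqrt d) / 2) (at (det (g x)))"
    using DERIV_real_sqrt[OF dpos] unfolding d_def .
  have rhod: "(\<lambda>z. sqrt (det (g z))) differentiable (at x)"
    by (rule diff_comp[OF Dd sqd])
  have hd: "(\<lambda>z. \<Sum>a\<in>UNIV. partial a f z * w z $ a $ b) differentiable (at x)" for b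
    by (rule differentiable_sum) (auto intro: differentiable_mult[OF fad wd])
  have step1: "partial b (\<lambda>z. sqrt (det (g z)) * ham_vf w f z $ b) x =
     sqrt d * (\<Sum>a\<in>UNIV. fa a * W' b a b + fab b a * W a b) + D' b * (inverse (sqrt d) / 2) * (\<Sum>a\<in>UNIV. fa a * W a b)"
    for b
  proof -
    have "partial b (\<lambda>z. sqrt (det (g z)) * ham_vf w f z $ b) x
        = partial b (\<lambda>z. sqrt (det (g z)) * (\<Sum>a\<in>UNIV. partial a f z * w z $ a $ b)) x"
      by (simp add: ham_vf_def)
    also have "\<dots> = sqrt d * partial b (\<lambda>z. \<Sum>a\<in>UNIV. partial a f z * w z $ a $ b) x
          + partial b (\<lambda>z. sqrt (det (g z))) x * (\<Sum>a\<in>UNIV. fa a * W a b)"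
      by (simp add: partial_mult[OF rhod hd] d_def fa_def W_def)
    also have "partial b (\<lambda>z. \<Sum>a\<in>UNIV. partial a f z * w z $ a $ b) x = (\<Sum>a\<in>UNIV. fa a * W' b a b + fab b a * W a b)"
      apply (subst partial_sum)
       apply (rule differentiable_mult[OF fad wd])
      apply (simp add: partial_mult[OF fad wd] fa_def fab_def W_def W'_def)
      done
    also have "partial b (\<lambda>z. sqrt (det (g z))) x = D' b * (inverse (sqrt d) / 2)"
      unfolding D'_def by (rule partial_comp[OF Dd sqd])
    finally show ?thesis .
  qed
  have LHS: "modular_vf w (\<lambda>x. sqrt (det (g x))) f x =
     (\<Sum>b\<in>UNIV. (\<Sum>a\<in>UNIV. fa a * W' b a b + fab b a * W a b) + D' b / (2 * d) * (\<Sum>a\<in>UNIV. fa a * W a b))"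
  proof -
    have "modular_vf w (\<lambda>x. sqrt (det (g x))) f x = (\<Sum>b\<in>UNIV. 
        sqrt d * (\<Sum>a\<in>UNIV. fa a * W' b a b + fab b a * W a b) + D' b * (inverse (sqrt d) / 2) * (\<Sum>a\<in>UNIV. fa a * W a b)) / sqrt d"
      unfolding modular_vf_def divergence_def step1 d_def ..
    also have "\<dots> = (\<Sum>b\<in>UNIV. (sqrt d * (\<Sum>a\<in>UNIV. fa a * W' b a b + fab b a * W a b) + D' b * (inverse (sqrt d) / 2) * (\<Sum>a\<in>UNIV. fa a * W a b)) / sqrt d)"
      by (rule sum_divide_distrib)
    also have "\<dots> = (\<Sum>b\<in>UNIV. (\<Sum>a\<in>UNIV. fa a * W' b a b + fab b a * W a b) + D' b / (2 * d) * (\<Sum>a\<in>UNIV. fa a * W a b))"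
    proof (intro sum.cong refl)
      fix b
      have "\<And>s X D Y::real. s > 0 \<Longrightarrow> (s * X + D * (inverse s / 2) * Y) / s = X + D / (2 * (s * s)) * Y"
        by (simp add: field_simps)
      from this[of "sqrt d"] show "(sqrt d * (\<Sum>a\<in>UNIV. fa a * W' b a b + fab b a * W a b) + D' b * (inverse (sqrt d) / 2) * (\<Sum>a\<in>UNIV. fa a * W a b)) / sqrt d
          = (\<Sum>a\<in>UNIV. fa a * W' b a b + fab b a * W a b) + D' b / (2 * d) * (\<Sum>a\<in>UNIV. fa a * W a b)"
        using dpos by simp
    qed
    finally show ?thesis .
  qed
  have lnd: "partial k (\<lambda>z. ln (sqrt (det (g z)))) x = D' k * (1 / (2 * d))" for k
    unfolding D'_def d_def by (rule partial_comp[OF Dd ln_sqrt_deriv[OF dpos[unfolded d_def]]])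
  have RHS: "vf_apply (\<lambda>x. \<chi> i. \<Sum>k\<in>UNIV. partial k (\<lambda>z. w z $ i $ k) x
                     + w x $ i $ k * partial k (\<lambda>z. ln (sqrt (det (g z)))) x) f x
     = (\<Sum>a\<in>UNIV. (\<Sum>k\<in>UNIV. W' k a k + W a k * (D' k * (1 / (2 * d)))) * fa a)"
    unfolding vf_apply_def lnd by (simp add: W_def W'_def fa_def)
  have Z: "(\<Sum>b\<in>UNIV. \<Sum>a\<in>UNIV. fab b a * W a b) = 0"
  proof (rule sym_skew_sum)
    fix i j
    show "fab i j = fab j i" unfolding fab_def
      by (rule partial_swap[OF U x fd fad fad])
    show "W j i = - W i j" unfolding W_def by (rule wskew)
  qed
  have "(\<Sum>b\<in>UNIV. (\<Sum>a\<in>UNIV. fa a * W' b a b + fab b a * W a b) + D' b / (2 * d) * (\<Sum>a\<in>UNIV. fa a * W a b))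
      = (\<Sum>b\<in>UNIV. \<Sum>a\<in>UNIV. fa a * W' b a b) + (\<Sum>b\<in>UNIV. \<Sum>a\<in>UNIV. fab b a * W a b)
        + (\<Sum>b\<in>UNIV. \<Sum>a\<in>UNIV. W a b * (D' b * (1 / (2 * d))) * fa a)"
    by (simp add: sum.distrib sum_distrib_left mult_ac)
  also have "\<dots> = (\<Sum>a\<in>UNIV. \<Sum>b\<in>UNIV. W' b a b * fa a) + (\<Sum>a\<in>UNIV. \<Sum>b\<in>UNIV. W a b * (D' b * (1 / (2 * d))) * fa a)"
  proof -
    have s1: "(\<Sum>b\<in>UNIV. \<Sum>a\<in>UNIV. fa a * W' b a b) = (\<Sum>a\<in>UNIV. \<Sum>b\<in>UNIV. W' b a b * fa a)"
      by (subst sum.swap) (simp add: mult.commute)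
    have s2: "(\<Sum>b\<in>UNIV. \<Sum>a\<in>UNIV. W a b * (D' b * (1 / (2 * d))) * fa a) = (\<Sum>a\<in>UNIV. \<Sum>b\<in>UNIV. W a b * (D' b * (1 / (2 * d))) * fa a)"
      by (rule sum.swap)
    show ?thesis unfolding Z s1 s2 by simp
  qed
  also have "\<dots> = (\<Sum>a\<in>UNIV. (\<Sum>b\<in>UNIV. W' b a b * fa a) + (\<Sum>b\<in>UNIV. W a b * (D' b * (1 / (2 * d))) * fa a))"
    by (simp only: sum.distrib)
  also have "\<dots> = (\<Sum>a\<in>UNIV. (\<Sum>k\<in>UNIV. W' k a k + W a k * (D' k * (1 / (2 * d)))) * fa a)"
    by (intro sum.cong refl) (simp only: sum_distrib_right distrib_right sum.distrib)
  finally show ?thesis unfolding LHS RHS .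
qed


lemma part2:
  fixes U :: "(real^'n::finite) set"
    and w :: "real^'n \<Rightarrow> real^'n^'n"
    and g :: "real^'n \<Rightarrow> real^'n^'n"
  assumes U: "open U" and P: "poisson_on U w" and R: "riemannian_metric_on U g"
    and F: "smooth_on {p :: real^('n + 'n). xpart p \<in> U} F" and p: "xpart p \<in> U"
  shows "modular_vf (complete_lift w) (\<lambda>p. det (g (xpart p))) F p =
         vf_apply (\<lambda>q. 2 *\<^sub>R vertical_lift (\<lambda>x. \<chi> i. \<Sum>k\<in>UNIV. partial k (\<lambda>z. w z $ i $ k) x
                     + w x $ i $ k * partial k (\<lambda>z. ln (sqrt (det (g z)))) x) q) F p"
proof -
  define TU where "TU = {p :: real^('n + 'n). xpart p \<in> U}"
  define x where "x = xpart p"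
  have x: "x \<in> U" using p x_def by simp
  have TU: "open TU"
  proof -
    have "TU = xpart -` U" unfolding TU_def by auto
    moreover have "continuous_on UNIV xpart" using xpart_linear linear_continuous_on by blast
    ultimately show ?thesis using U open_vimage by metis
  qed
  have pT: "p \<in> TU" using p TU_def by simp
  have Fs: "smooth_on TU F" using F TU_def by simp
  have wsm: "smooth_on U (\<lambda>z. w z $ a $ b)" for a b using P unfolding poisson_on_def by blast
  have wskew: "w z $ a $ b = - w z $ b $ a" if "z \<in> U" for a b z using P that unfolding poisson_on_def by blast
  have gsm: "smooth_on U (\<lambda>z. g z $ a $ b)" for a b using R unfolding riemannian_metric_on_def by blast
  have gpd: "\<forall>v. v \<noteq> 0 \<longrightarrow> v \<bullet> (g x *v v) > 0" using R x unfolding riemannian_metric_on_def by blast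
  have wd: "(\<lambda>z. w z $ a $ b) differentiable (at x)" for a b
    using smooth_diff[OF U wsm x, of "[]"] by simp
  have wpd: "partial k (\<lambda>z. w z $ a $ b) differentiable (at x)" for a b k
    using smooth_diff[OF U wsm x, of "[k]"] by simp
  have wxd: "(\<lambda>z. w (xpart z) $ a $ b) differentiable (at p)" for a b
    using xcomp_diff[of "\<lambda>z. w z $ a $ b"] wd x_def by simp
  have wpxd: "(\<lambda>z. partial k (\<lambda>z. w z $ a $ b) (xpart z)) differentiable (at p)" for a b k
    using xcomp_diff[of "partial k (\<lambda>z. w z $ a $ b)"] wpd x_def by simp
  have Fd: "F differentiable (at z)" if "z \<in> TU" for z
    using smooth_diff[OF TU Fs that, of "[]"] by simp
  have Fad: "partial a F differentiable (at p)" for a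
    using smooth_diff[OF TU Fs pT, of "[a]"] by simp
  have Dd: "(\<lambda>z. det (g z)) differentiable (at x)"
    by (rule det_differentiable) (use smooth_diff[OF U gsm x, of "[]"] in simp)
  have Dxd: "(\<lambda>z. det (g (xpart z))) differentiable (at p)"
    using xcomp_diff[of "\<lambda>z. det (g z)"] Dd x_def by simp
  define d where "d = det (g x)"
  have dpos: "d > 0" unfolding d_def by (rule pd_det_pos[OF gpd])
  define D' where "D' b = partial b (\<lambda>z. det (g z)) x" for b
  define Fx where "Fx i = partial (Inl i) F p" for i
  define Fy where "Fy i = partial (Inr i) F p" for i
  define Fyx where "Fyx i j = partial (Inl j) (partial (Inr i) F) p" for i j
  define Fxy where "Fxy i j = partial (Inr j) (partial (Inl i) F) p" for i j
  define Fyy where "Fyy i j = partial (Inr j) (partial (Inr i) F) p" for i j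
  define W where "W a b = w x $ a $ b" for a b
  define W' where "W' k a b = partial k (\<lambda>z. w z $ a $ b) x" for a b k
  define C where "C i j = (\<Sum>k\<in>UNIV. ypart p $ k * W' k i j)" for i j
  define XL where "XL j = (\<lambda>z. - (\<Sum>i\<in>UNIV. partial (Inr i) F z * w (xpart z) $ j $ i))" for j
  define XR where "XR j = (\<lambda>z. (\<Sum>i\<in>UNIV. partial (Inl i) F z * w (xpart z) $ i $ j)
      + (\<Sum>i\<in>UNIV. partial (Inr i) F z * (\<Sum>k\<in>UNIV. ypart z $ k * partial k (\<lambda>z. w z $ i $ j) (xpart z))))" for j
  have hamL: "ham_vf (complete_lift w) F z $ Inl j = XL j z" for z j
    unfolding ham_vf_def complete_lift_def XL_def by (simp add: sum_UNIV_Plus sum_negf)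
  have hamR: "ham_vf (complete_lift w) F z $ Inr j = XR j z" for z j
    unfolding ham_vf_def complete_lift_def XR_def by (simp add: sum_UNIV_Plus)
  have XLd: "XL j differentiable (at p)" for j
    unfolding XL_def by (intro differentiable_minus differentiable_sum) (auto intro: differentiable_mult[OF Fad wxd])
  have cd: "(\<lambda>z. \<Sum>k\<in>UNIV. ypart z $ k * partial k (\<lambda>z. w z $ i $ j) (xpart z)) differentiable (at p)" for i j
    by (rule differentiable_sum) (auto intro: differentiable_mult[OF ycomp_diff wpxd])
  have s1d: "(\<lambda>z. \<Sum>i\<in>UNIV. partial (Inl i) F z * w (xpart z) $ i $ j) differentiable (at p)" for j
    by (rule differentiable_sum) (auto intro: differentiable_mult[OF Fad wxd])
  have s2d: "(\<lambda>z. \<Sum>i\<in>UNIV. partial (Inr i) F z * (\<Sum>k\<in>UNIV. ypart z $ k * partial k (\<lambda>z. w z $ i $ j) (xpart z))) differentiable (at p)" for j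
    by (rule differentiable_sum) (auto intro: differentiable_mult[OF Fad cd])
  have sLd: "(\<lambda>z. \<Sum>i\<in>UNIV. partial (Inr i) F z * w (xpart z) $ j $ i) differentiable (at p)" for j
    by (rule differentiable_sum) (auto intro: differentiable_mult[OF Fad wxd])
  have XRd: "XR j differentiable (at p)" for j
    unfolding XR_def by (rule differentiable_add[OF s1d s2d])
  have wxpL: "partial (Inl k) (\<lambda>z. w (xpart z) $ a $ b) p = W' k a b" for k a b
    using xcomp_partial(1)[of "\<lambda>z. w z $ a $ b" p k] wd x_def W'_def by simp
  have wxpR: "partial (Inr k) (\<lambda>z. w (xpart z) $ a $ b) p = 0" for k a b
    using xcomp_partial(2)[of "\<lambda>z. w z $ a $ b" p k] wd x_def by simp
  have wpxpR: "partial (Inr k) (\<lambda>z. partial l (\<lambda>z. w z $ a $ b) (xpart z)) p = 0" for k l a b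
    using xcomp_partial(2)[of "partial l (\<lambda>z. w z $ a $ b)" p k] wpd x_def by simp
  have pC: "partial (Inr j) (\<lambda>z. \<Sum>k\<in>UNIV. ypart z $ k * partial k (\<lambda>z. w z $ a $ b) (xpart z)) p = W' j a b" for j a b
  proof -
    have "partial (Inr j) (\<lambda>z. \<Sum>k\<in>UNIV. ypart z $ k * partial k (\<lambda>z. w z $ a $ b) (xpart z)) p
        = (\<Sum>k\<in>UNIV. ypart p $ k * 0 + (if j = k then 1 else 0) * W' k a b)"
      apply (subst partial_sum)
       apply (rule differentiable_mult[OF ycomp_diff wpxd])
      apply (simp add: partial_mult[OF ycomp_diff wpxd] wpxpR ycomp_partial W'_def x_def)
      done
    also have "\<dots> = (\<Sum>k\<in>UNIV. if j = k then W' k a b else 0)"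
      by (intro sum.cong refl) simp
    also have "\<dots> = W' j a b" by (simp add: sum.delta)
    finally show ?thesis .
  qed
  have pXL: "partial (Inl j) (XL j) p = - (\<Sum>i\<in>UNIV. Fy i * W' j j i + Fyx i j * W j i)" for j
    unfolding XL_def
    apply (subst partial_minus[OF sLd])
    apply (subst partial_sum)
     apply (rule differentiable_mult[OF Fad wxd])
    apply (simp add: partial_mult[OF Fad wxd] wxpL Fy_def Fyx_def W_def x_def)
    done
  have pXR: "partial (Inr j) (XR j) p = (\<Sum>i\<in>UNIV. Fx i * 0 + Fxy i j * W i j) + (\<Sum>i\<in>UNIV. Fy i * W' j i j + Fyy i j * C i j)" for j
    unfolding XR_def
    apply (subst partial_add[OF s1d s2d])
    apply (subst partial_sum)
     apply (rule differentiable_mult[OF Fad wxd])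
    apply (subst partial_sum)
     apply (rule differentiable_mult[OF Fad cd])
    apply (simp add: partial_mult[OF Fad wxd] partial_mult[OF Fad cd] wxpR pC Fx_def Fy_def Fxy_def Fyy_def W_def C_def W'_def x_def)
    done
  have pDL: "partial (Inl j) (\<lambda>z. det (g (xpart z))) p = D' j" for j
    unfolding D'_def x_def by (rule xcomp_partial(1)) (use Dd x_def in simp)
  have pDR: "partial (Inr j) (\<lambda>z. det (g (xpart z))) p = 0" for j
    by (rule xcomp_partial(2)) (use Dd x_def in simp)
  have Phip: "det (g (xpart p)) = d" unfolding d_def x_def ..
  have split: "modular_vf (complete_lift w) (\<lambda>p. det (g (xpart p))) F p
      = ((\<Sum>j\<in>UNIV. partial (Inl j) (\<lambda>z. det (g (xpart z)) * XL j z) p)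
        + (\<Sum>j\<in>UNIV. partial (Inr j) (\<lambda>z. det (g (xpart z)) * XR j z) p)) / d"
    unfolding modular_vf_def divergence_def sum_UNIV_Plus hamL hamR Phip ..
  have eL: "partial (Inl j) (\<lambda>z. det (g (xpart z)) * XL j z) p
      = d * - (\<Sum>i\<in>UNIV. Fy i * W' j j i + Fyx i j * W j i) + D' j * - (\<Sum>i\<in>UNIV. Fy i * W j i)" for j
  proof -
    have "XL j p = - (\<Sum>i\<in>UNIV. Fy i * W j i)" unfolding XL_def Fy_def W_def x_def ..
    then show ?thesis using partial_mult[OF Dxd XLd, of "Inl j" j] pDL pXL Phip by simp
  qed
  have eR: "partial (Inr j) (\<lambda>z. det (g (xpart z)) * XR j z) p
      = d * ((\<Sum>i\<in>UNIV. Fx i * 0 + Fxy i j * W i j) + (\<Sum>i\<in>UNIV. Fy i * W' j i j + Fyy i j * C i j)) + 0 * XR j p" for j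
    using partial_mult[OF Dxd XRd, of "Inr j" j] pDR pXR Phip by simp
  have lnd: "partial k (\<lambda>z. ln (sqrt (det (g z)))) x = D' k * (1 / (2 * d))" for k
    unfolding D'_def d_def by (rule partial_comp[OF Dd ln_sqrt_deriv[OF dpos[unfolded d_def]]])
  have RHS: "vf_apply (\<lambda>q. 2 *\<^sub>R vertical_lift (\<lambda>x. \<chi> i. \<Sum>k\<in>UNIV. partial k (\<lambda>z. w z $ i $ k) x
                     + w x $ i $ k * partial k (\<lambda>z. ln (sqrt (det (g z)))) x) q) F p
      = (\<Sum>i\<in>UNIV. 2 * (\<Sum>k\<in>UNIV. W' k i k + W i k * (D' k * (1 / (2 * d)))) * Fy i)"
    unfolding vf_apply_def sum_UNIV_Plus
    by (simp add: vertical_lift_def x_def[symmetric] lnd W_def W'_def Fy_def)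
  have sw: "Fyx i j = Fxy j i" for i j
    unfolding Fyx_def Fxy_def by (rule partial_swap[OF TU pT Fd Fad Fad])
  have yy: "Fyy i j = Fyy j i" for i j
    unfolding Fyy_def by (rule partial_swap[OF TU pT Fd Fad Fad])
  have Ws: "W i j = - W j i" for i j unfolding W_def using wskew[OF x] .
  have W's: "W' k i j = - W' k j i" for k i j
  proof -
    have "partial k (\<lambda>z. w z $ i $ j) x = partial k (\<lambda>z. - w z $ j $ i) x"
      by (rule partial_local[OF U x]) (erule wskew, rule differentiable_minus[OF wd])
    also have "\<dots> = - partial k (\<lambda>z. w z $ j $ i) x" by (rule partial_minus[OF wd])
    finally show ?thesis unfolding W'_def .
  qed
  have Cs: "C i j = - C j i" for i j
    unfolding C_def by (simp add: W's[of _ i j] sum_negf[symmetric])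
  show ?thesis unfolding split eL eR RHS
    by (rule alg2[OF sw yy Ws W's Cs dpos])
qed


theorem proposition1p7:
  fixes U :: "(real^'n::finite) set"
    and w :: "real^'n \<Rightarrow> real^'n^'n"
    and g :: "real^'n \<Rightarrow> real^'n^'n"
  assumes "open U"
    and "poisson_on U w"
    and "riemannian_metric_on U g"
  defines "TU \<equiv> {p :: real^('n + 'n). xpart p \<in> U}"
    and "dVg \<equiv> (\<lambda>x. sqrt (det (g x)))"
    and "Phi \<equiv> (\<lambda>p. det (g (xpart p)))"
    and "DeltaM \<equiv> (\<lambda>x. \<chi> i. \<Sum>k\<in>UNIV. partial k (\<lambda>z. w z $ i $ k) x
                     + w x $ i $ k * partial k (\<lambda>z. ln (sqrt (det (g z)))) x)"
  shows "(\<forall>f x. smooth_on U f \<and> x \<in> U \<longrightarrow> modular_vf w dVg f x = vf_apply DeltaM f x)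
       \<and> (\<forall>F p. smooth_on TU F \<and> p \<in> TU \<longrightarrow>
            modular_vf (complete_lift w) Phi F p = vf_apply (\<lambda>q. 2 *\<^sub>R vertical_lift DeltaM q) F p)"
  proof (intro conjI allI impI)
  fix f x assume a: "smooth_on U f \<and> x \<in> U"
  show "modular_vf w dVg f x = vf_apply DeltaM f x"
    unfolding dVg_def DeltaM_def using part1[OF assms(1,2,3)] a by blast
next
  fix F p assume a: "smooth_on TU F \<and> p \<in> TU"
  show "modular_vf (complete_lift w) Phi F p = vf_apply (\<lambda>q. 2 *\<^sub>R vertical_lift DeltaM q) F p"
    unfolding Phi_def DeltaM_def using part2[OF assms(1,2,3)] a unfolding TU_def by blast
qed

end
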